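(* Let $n\ge 2$ participants be partitioned as $[n]=H\sqcup C$ with $H\neq\emptyset$ (honest participants $H$, corrupt participants $C$). Suppose each participant $i$ holds one qubit $Q_i$, and the joint state of $Q_1,\dots,Q_n$ together with any auxiliary systems controlled by the corrupt participants is arbitrary (possibly entangled, and, after purifying into the corrupt participants' systems, assumed pure). Entanglement verification proceeds as follows: each honest participant $i\in H$ prepares $n-1$ fresh qubits in $\lvert 0\rangle$, applies a controlled-NOT with $Q_i$ as control and each fresh qubit as target, and sends one of these pseudo-copies to each other participant $j\neq i$; each corrupt participant sends to each honest participant an arbitrary qubit of its choice (possibly entangled with anything). Each honest participant $i$ then holds $n$ qubits ($Q_i$ and one qubit received from each $j\neq i$) and performs the two-outcome projective measurement $\{\Pi,\,I-\Pi\}$, where $\Pi$ is the projector onto $\mathrm{span}\{\lvert 0^n\rangle,\lvert 1^n\rangle\}$. If every honest participant obtains the outcome $\Pi$ (verification succeeds), then the post-measurement joint state is of the form $$\alpha\,\lvert 00\ldots 0\rangle_H\lvert\psi_0\rangle_C+\beta\,\lvert 11\ldots 1\rangle_H\lvert\psi_1\rangle_C,$$ where the subsystem $H$ consists of all qubits in the possession of the honest participants, the subsystem $C$ consists of all other systems (those held by corrupt participants, including pseudo-copies sent to them and their auxiliary systems), $\lvert\psi_0\rangle,\lvert\psi_1\rangle$ are unit vectors, and $\alpha,\beta\in\mathbb{C}$ satisfy $|\alpha|^2+|\beta|^2=1$. In particular this state is invariant under any permutation of the honest participants.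
   Context: Computational basis $\{\lvert 0\rangle,\lvert1\rangle\}$; $\lvert 0^n\rangle=\lvert 0\cdots0\rangle$, $\lvert 1^n\rangle=\lvert1\cdots1\rangle$ on $n$ qubits. A controlled-NOT applied to a target in $\lvert0\rangle$ creates a "pseudo-copy" of the control qubit in the computational basis. Communication between participants is over private authenticated quantum channels. *)

theory Defs
  imports Complex_Main
begin

text \<open>Participants are 0,...,n-1; H is the set of honest ones, C = {..<n} - H.
  Quantum states are amplitude functions on computational-basis configurations.
  A configuration of a family of qubits labelled by a set S is a function
  S-labels => bool that is False outside S.\<close>

definition cfg :: "'a set \<Rightarrow> ('a \<Rightarrow> bool) set" where
  "cfg S = {f. \<forall>x. x \<notin> S \<longrightarrow> \<not> f x}"

definition unit_vec :: "('a::finite \<Rightarrow> complex) \<Rightarrow> bool" where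
  "unit_vec v \<longleftrightarrow> (\<Sum>x\<in>UNIV. (cmod (v x))^2) = 1"

text \<open>Qubits held by honest participants after the exchange: label (i,k) with i in H,
  k < n: (i,i) is Q_i, (i,k) for k /= i is the qubit that i received from k.\<close>
definition HQ :: "nat \<Rightarrow> nat set \<Rightarrow> (nat \<times> nat) set" where
  "HQ n H = {(i,k). i \<in> H \<and> k < n}"

text \<open>Pseudo-copies sent by honest i to corrupt j: label (i,j).\<close>
definition CH :: "nat \<Rightarrow> nat set \<Rightarrow> (nat \<times> nat) set" where
  "CH n H = {(i,j). i \<in> H \<and> j < n \<and> j \<notin> H}"

text \<open>Qubits sent by corrupt j to honest i: label (j,i).\<close>
definition SC :: "nat \<Rightarrow> nat set \<Rightarrow> (nat \<times> nat) set" where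
  "SC n H = {(j,i). j < n \<and> j \<notin> H \<and> i \<in> H}"

text \<open>Initial pure state Phi on Q_H (configurations in cfg H) tensor 'r, where the
  finite type 'r is everything else (Q_j for corrupt j, auxiliary systems,
  purification). Unit norm.\<close>
definition init_state :: "nat set \<Rightarrow> ((nat \<Rightarrow> bool) \<times> 'r::finite \<Rightarrow> complex) \<Rightarrow> bool" where
  "init_state H \<Phi> \<longleftrightarrow>
     (\<Sum>x\<in>cfg H. \<Sum>r\<in>UNIV. (cmod (\<Phi> (x, r)))^2) = 1"

text \<open>Most general (purified) action of the corrupt participants: an isometry V from
  (pseudo-copies received by C) tensor 'r to (qubits sent by C to H) tensor 'c,
  where the finite type 'c is the corrupt participants' remaining system.
  Matrix entries: V (output) (input).\<close>
definition isometry_C ::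
  "nat \<Rightarrow> nat set \<Rightarrow> ((nat \<times> nat \<Rightarrow> bool) \<times> 'c::finite \<Rightarrow> (nat \<times> nat \<Rightarrow> bool) \<times> 'r::finite \<Rightarrow> complex) \<Rightarrow> bool" where
  "isometry_C n H V \<longleftrightarrow>
     (\<forall>a \<in> cfg (CH n H) \<times> UNIV. \<forall>b \<in> cfg (CH n H) \<times> UNIV.
        (\<Sum>y \<in> cfg (SC n H) \<times> UNIV. cnj (V y a) * V y b) = (if a = b then 1 else 0))"

text \<open>Honest i CNOT-copies Q_i to each j /= i; copies to honest k are held by k as qubit (k,i),
  copies to corrupt j are inputs of V; outputs of V labelled (j,i) are held by i as (i,j).\<close>
definition pre_state ::
  "nat \<Rightarrow> nat set \<Rightarrow> ((nat \<Rightarrow> bool) \<times> 'r::finite \<Rightarrow> complex)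
   \<Rightarrow> ((nat \<times> nat \<Rightarrow> bool) \<times> 'c::finite \<Rightarrow> (nat \<times> nat \<Rightarrow> bool) \<times> 'r \<Rightarrow> complex)
   \<Rightarrow> (nat \<times> nat \<Rightarrow> bool) \<times> 'c \<Rightarrow> complex" where
  "pre_state n H \<Phi> V = (\<lambda>(h, c).
     if h \<in> cfg (HQ n H) \<and> (\<forall>i\<in>H. \<forall>k\<in>H. h (i, k) = h (k, k)) then
       (\<Sum>r\<in>UNIV. \<Phi> (\<lambda>i. i \<in> H \<and> h (i, i), r) *
          V (\<lambda>(j, i). j < n \<and> j \<notin> H \<and> i \<in> H \<and> h (i, j), c)
            (\<lambda>(i, j). i \<in> H \<and> j < n \<and> j \<notin> H \<and> h (i, i), r))
     else 0)"

text \<open>Each honest i measures {Pi, I - Pi} on its n qubits (i,0),...,(i,n-1), Pi the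
  projector onto span{|0^n>, |1^n>}. Joint outcome "all Pi" projects onto:\<close>
definition honest_success :: "nat \<Rightarrow> nat set \<Rightarrow> (nat \<times> nat \<Rightarrow> bool) \<Rightarrow> bool" where
  "honest_success n H h \<longleftrightarrow> (\<forall>i\<in>H. \<forall>k<n. h (i, k) = h (i, i))"

definition projected ::
  "nat \<Rightarrow> nat set \<Rightarrow> ((nat \<times> nat \<Rightarrow> bool) \<times> 'c \<Rightarrow> complex) \<Rightarrow> (nat \<times> nat \<Rightarrow> bool) \<times> 'c \<Rightarrow> complex" where
  "projected n H \<Psi> = (\<lambda>(h, c). if honest_success n H h then \<Psi> (h, c) else 0)"

definition success_prob ::
  "nat \<Rightarrow> nat set \<Rightarrow> ((nat \<times> nat \<Rightarrow> bool) \<times> 'c::finite \<Rightarrow> complex) \<Rightarrow> real" where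
  "success_prob n H \<Psi> = (\<Sum>h\<in>cfg (HQ n H). \<Sum>c\<in>UNIV. (cmod (projected n H \<Psi> (h, c)))^2)"

definition post_state ::
  "nat \<Rightarrow> nat set \<Rightarrow> ((nat \<times> nat \<Rightarrow> bool) \<times> 'c::finite \<Rightarrow> complex) \<Rightarrow> (nat \<times> nat \<Rightarrow> bool) \<times> 'c \<Rightarrow> complex" where
  "post_state n H \<Psi> = (\<lambda>hc. projected n H \<Psi> hc / complex_of_real (sqrt (success_prob n H \<Psi>)))"

end

theory Submission
  imports Defs
begin

lemma unit_decomp:
  fixes f :: "'c::finite \<Rightarrow> complex"
  shows "\<exists>\<psi>. unit_vec \<psi> \<and> (\<forall>c. f c = complex_of_real (sqrt (\<Sum>x\<in>UNIV. (cmod (f x))^2)) * \<psi> c)"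
proof (cases "(\<Sum>x\<in>UNIV. (cmod (f x))^2) = 0")
  case True
  then have z: "\<forall>c. f c = 0"
    by (simp add: sum_nonneg_eq_0_iff)
  let ?\<psi> = "\<lambda>c::'c. if c = undefined then (1::complex) else 0"
  have "unit_vec ?\<psi>"
  proof -
    have "(\<Sum>x\<in>UNIV. (cmod (?\<psi> x))^2) = (\<Sum>x\<in>(UNIV::'c set). if x = undefined then 1 else (0::real))"
      by (rule sum.cong[OF refl]) simp
    then show ?thesis unfolding unit_vec_def by simp
  qed
  then show ?thesis using z True by auto
next
  case False
  define s where "s = (\<Sum>x\<in>UNIV. (cmod (f x))^2)"
  have s0: "s > 0" using False unfolding s_def
    by (metis (no_types, lifting) order_less_le sum_nonneg zero_le_power2)
  let ?\<psi> = "\<lambda>c. f c / complex_of_real (sqrt s)"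
  have "(\<Sum>x\<in>UNIV. (cmod (?\<psi> x))^2) = (\<Sum>x\<in>UNIV. (cmod (f x))^2 / s)"
    using s0 by (simp add: norm_divide power_divide)
  also have "\<dots> = 1" using s0 by (simp add: s_def[symmetric] sum_divide_distrib[symmetric])
  finally have "unit_vec ?\<psi>" unfolding unit_vec_def .
  moreover have "\<forall>c. f c = complex_of_real (sqrt s) * ?\<psi> c" using s0 by simp
  ultimately show ?thesis unfolding s_def by blast
qed

theorem lemma1:
  fixes n :: nat and H :: "nat set"
    and \<Phi> :: "(nat \<Rightarrow> bool) \<times> 'r::finite \<Rightarrow> complex"
    and V :: "(nat \<times> nat \<Rightarrow> bool) \<times> 'c::finite \<Rightarrow> (nat \<times> nat \<Rightarrow> bool) \<times> 'r \<Rightarrow> complex"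
  assumes "n \<ge> 2" and "H \<subseteq> {..<n}" and "H \<noteq> {}"
    and "init_state H \<Phi>"
    and "isometry_C n H V"
    and "success_prob n H (pre_state n H \<Phi> V) > 0"
  shows "\<exists>\<alpha> \<beta> (\<psi>0 :: 'c \<Rightarrow> complex) \<psi>1.
           unit_vec \<psi>0 \<and> unit_vec \<psi>1 \<and> (cmod \<alpha>)^2 + (cmod \<beta>)^2 = 1 \<and>
           (\<forall>h c. post_state n H (pre_state n H \<Phi> V) (h, c) =
              \<alpha> * (if h = (\<lambda>_. False) then \<psi>0 c else 0) +
              \<beta> * (if h = (\<lambda>p. p \<in> HQ n H) then \<psi>1 c else 0))
         \<and> (\<forall>\<sigma>. bij_betw \<sigma> H H \<longrightarrow>
              (\<forall>h c. post_state n H (pre_state n H \<Phi> V)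
                        ((\<lambda>(i, k). h ((if i \<in> H then \<sigma> i else i), (if k \<in> H then \<sigma> k else k))), c)
                     = post_state n H (pre_state n H \<Phi> V) (h, c)))"
proof -
  define \<Psi> where "\<Psi> = pre_state n H \<Phi> V"
  define P where "P = projected n H \<Psi>"
  define z where "z = (\<lambda>_::nat\<times>nat. False)"
  define w where "w = (\<lambda>p. p \<in> HQ n H)"
  define p where "p = success_prob n H \<Psi>"
  have pp: "p > 0" using assms(6) unfolding p_def \<Psi>_def .
  obtain i0 where i0: "i0 \<in> H" using assms(3) by blast
  have i0n: "i0 < n" using i0 assms(2) by auto
  have zo: "z \<noteq> w"
  proof
    assume "z = w"
    then have "z (i0, i0) = w (i0, i0)" by simp
    then show False using i0 i0n unfolding z_def w_def HQ_def by auto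
  qed
  have A: "P (h, c) = 0" if "h \<noteq> z" "h \<noteq> w" for h c
  proof (rule ccontr)
    assume ne: "P (h, c) \<noteq> 0"
    then have hs: "honest_success n H h" and ne2: "\<Psi> (h, c) \<noteq> 0"
      unfolding P_def projected_def by (auto split: if_splits)
    have "\<Psi> (h, c) = (if h \<in> cfg (HQ n H) \<and> (\<forall>i\<in>H. \<forall>k\<in>H. h (i, k) = h (k, k)) then
       (\<Sum>r\<in>UNIV. \<Phi> (\<lambda>i. i \<in> H \<and> h (i, i), r) *
          V (\<lambda>(j, i). j < n \<and> j \<notin> H \<and> i \<in> H \<and> h (i, j), c)
            (\<lambda>(i, j). i \<in> H \<and> j < n \<and> j \<notin> H \<and> h (i, i), r))
     else 0)"
      by (simp only: \<Psi>_def pre_state_def case_prod_conv)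
    note eq = this
    have cond: "h \<in> cfg (HQ n H) \<and> (\<forall>i\<in>H. \<forall>k\<in>H. h (i, k) = h (k, k))"
    proof (rule ccontr)
      assume nc: "\<not> (h \<in> cfg (HQ n H) \<and> (\<forall>i\<in>H. \<forall>k\<in>H. h (i, k) = h (k, k)))"
      have "\<Psi> (h, c) = 0" using eq by (simp only: if_not_P[OF nc])
      then show False using ne2 by contradiction
    qed
    then have hc: "h \<in> cfg (HQ n H)" and hk: "\<forall>i\<in>H. \<forall>k\<in>H. h (i, k) = h (k, k)"
      by blast+
    define b where "b = h (i0, i0)"
    have hb: "h = (\<lambda>q. b \<and> q \<in> HQ n H)"
    proof
      fix q :: "nat \<times> nat"
      obtain i k where q: "q = (i, k)" by (cases q) simp
      show "h q = (b \<and> q \<in> HQ n H)"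
      proof (cases "q \<in> HQ n H")
        case True
        then have i: "i \<in> H" "k < n" using q unfolding HQ_def by simp_all
        have ii: "i < n" using i assms(2) by blast
        have "h (i, k) = h (i, i)" using hs i unfolding honest_success_def by blast
        also have "\<dots> = h (i, i0)" using hs i(1) i0n unfolding honest_success_def by metis
        also have "\<dots> = h (i0, i0)" using hk i(1) i0 by blast
        finally have "h q = b" using q b_def by simp
        then show ?thesis using True by simp
      next
        case False
        then have "\<not> h q" using hc unfolding cfg_def by blast
        then show ?thesis using False by simp
      qed
    qed
    show False
    proof (cases b)
      case True then show False using that hb unfolding w_def by simp
    next
      case False then show False using that hb unfolding z_def by simp
    qed
  qed
  have fin: "finite (cfg (HQ n H))"
  proof (rule ccontr)
    assume inf: "infinite (cfg (HQ n H))"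
    have "p = 0" unfolding p_def success_prob_def using inf by (rule sum.infinite)
    then show False using pp by simp
  qed
  have zin: "z \<in> cfg (HQ n H)" and oin: "w \<in> cfg (HQ n H)"
    unfolding z_def w_def cfg_def by auto
  define p0 where "p0 = (\<Sum>c\<in>UNIV. (cmod (P (z, c)))^2)"
  define p1 where "p1 = (\<Sum>c\<in>UNIV. (cmod (P (w, c)))^2)"
  have "p = (\<Sum>h\<in>cfg (HQ n H). \<Sum>c\<in>UNIV. (cmod (P (h, c)))^2)"
    unfolding p_def success_prob_def P_def ..
  also have "\<dots> = (\<Sum>h\<in>{z, w}. \<Sum>c\<in>UNIV. (cmod (P (h, c)))^2)"
  proof (rule sum.mono_neutral_right[OF fin])
    show "{z, w} \<subseteq> cfg (HQ n H)" using zin oin by blast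
    show "\<forall>i\<in>cfg (HQ n H) - {z, w}. (\<Sum>c\<in>UNIV. (cmod (P (i, c)))^2) = 0"
    proof
      fix i assume "i \<in> cfg (HQ n H) - {z, w}"
      then have "i \<noteq> z" "i \<noteq> w" by blast+
      then have "\<And>c. P (i, c) = 0" using A by blast
      then show "(\<Sum>c\<in>UNIV. (cmod (P (i, c)))^2) = 0" by simp
    qed
  qed
  also have "\<dots> = p0 + p1" using zo unfolding p0_def p1_def by simp
  finally have psum: "p = p0 + p1" .
  have p0nn: "p0 \<ge> 0" "p1 \<ge> 0" unfolding p0_def p1_def by (auto intro: sum_nonneg)
  obtain \<psi>0 where u0: "unit_vec \<psi>0" and d0: "\<forall>c. P (z, c) = complex_of_real (sqrt p0) * \<psi>0 c"
    using unit_decomp[of "\<lambda>c. P (z, c)"] unfolding p0_def by blast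
  obtain \<psi>1 where u1: "unit_vec \<psi>1" and d1: "\<forall>c. P (w, c) = complex_of_real (sqrt p1) * \<psi>1 c"
    using unit_decomp[of "\<lambda>c. P (w, c)"] unfolding p1_def by blast
  define \<alpha> where "\<alpha> = complex_of_real (sqrt p0 / sqrt p)"
  define \<beta> where "\<beta> = complex_of_real (sqrt p1 / sqrt p)"
  have sq: "(cmod (complex_of_real (sqrt a / sqrt p)))^2 = a / p" if "a \<ge> 0" for a
  proof -
    have "(cmod (complex_of_real (sqrt a / sqrt p)))^2 = (sqrt a / sqrt p)^2"
      by (simp only: norm_of_real power2_abs)
    also have "\<dots> = a / p" using that pp by (simp add: power_divide)
    finally show ?thesis .
  qed
  have norm: "(cmod \<alpha>)^2 + (cmod \<beta>)^2 = 1"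
  proof -
    have "(cmod \<alpha>)^2 + (cmod \<beta>)^2 = p0 / p + p1 / p"
      unfolding \<alpha>_def \<beta>_def using sq p0nn by simp
    also have "\<dots> = 1" using pp psum by (simp add: add_divide_distrib[symmetric])
    finally show ?thesis .
  qed
  have post: "post_state n H \<Psi> (h, c) = P (h, c) / complex_of_real (sqrt p)" for h c
    unfolding post_state_def P_def p_def by simp
  have form: "post_state n H \<Psi> (h, c) =
              \<alpha> * (if h = z then \<psi>0 c else 0) + \<beta> * (if h = w then \<psi>1 c else 0)" for h c
  proof -
    consider "h = z" | "h = w" | "h \<noteq> z" "h \<noteq> w" by blast
    then show ?thesis
    proof cases
      case 1 then show ?thesis using zo d0 pp unfolding post \<alpha>_def by simp
    next
      case 2 then show ?thesis using zo d1 pp unfolding post \<beta>_def by simp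
    next
      case 3 then show ?thesis using A unfolding post by simp
    qed
  qed
  have perm: "post_state n H \<Psi>
                ((\<lambda>(i, k). h ((if i \<in> H then \<sigma> i else i), (if k \<in> H then \<sigma> k else k))), c)
              = post_state n H \<Psi> (h, c)" if bij: "bij_betw \<sigma> H H" for \<sigma> h c
  proof -
    define s where "s = (\<lambda>i. if i \<in> H then \<sigma> i else i)"
    define \<tau> where "\<tau> = (\<lambda>(i, k). (s i, s k))"
    have eq: "(\<lambda>(i, k). h ((if i \<in> H then \<sigma> i else i), (if k \<in> H then \<sigma> k else k))) = h \<circ> \<tau>"
      unfolding \<tau>_def s_def by (auto simp: fun_eq_iff)
    have sH: "s i \<in> H \<longleftrightarrow> i \<in> H" for i
      using bij unfolding s_def bij_betw_def by auto
    have sn: "s i < n \<longleftrightarrow> i < n" for i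
      using bij assms(2) unfolding s_def bij_betw_def by auto
    have tHQ: "\<tau> q \<in> HQ n H \<longleftrightarrow> q \<in> HQ n H" for q
      unfolding \<tau>_def HQ_def using sH sn by (cases q) auto
    have ssurj: "\<exists>i. s i = a" for a
    proof (cases "a \<in> H")
      case True
      then have "a \<in> \<sigma> ` H" using bij unfolding bij_betw_def by simp
      then obtain i where "i \<in> H" "\<sigma> i = a" by blast
      then show ?thesis unfolding s_def by auto
    next
      case False then show ?thesis unfolding s_def by auto
    qed
    have tsurj: "surj \<tau>"
    proof -
      have "\<exists>q. \<tau> q = (a, b)" for a b
        using ssurj[of a] ssurj[of b] unfolding \<tau>_def by auto
      then have "\<forall>y. \<exists>q. y = \<tau> q" by (metis surj_pair)
      then show ?thesis unfolding surj_def by blast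
    qed
    have cancel: "f \<circ> \<tau> = g \<circ> \<tau> \<Longrightarrow> f = g" for f g :: "nat \<times> nat \<Rightarrow> bool"
    proof
      fix q
      assume fg: "f \<circ> \<tau> = g \<circ> \<tau>"
      obtain q' where "q = \<tau> q'" using tsurj by blast
      moreover have "f (\<tau> q') = g (\<tau> q')" using fg by (metis comp_apply)
      ultimately show "f q = g q" by simp
    qed
    have zt: "z \<circ> \<tau> = z" unfolding z_def by auto
    have ot: "w \<circ> \<tau> = w" unfolding w_def using tHQ by auto
    have "h \<circ> \<tau> = z \<longleftrightarrow> h = z" using cancel[of h z] zt by auto
    moreover have "h \<circ> \<tau> = w \<longleftrightarrow> h = w" using cancel[of h w] ot by auto
    ultimately show ?thesis unfolding eq form by simp
  qed
  show ?thesis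
    unfolding \<Psi>_def[symmetric] z_def[symmetric] w_def[symmetric]
  proof (intro exI conjI allI impI)
    show "unit_vec \<psi>0" by (rule u0)
    show "unit_vec \<psi>1" by (rule u1)
    show "(cmod \<alpha>)^2 + (cmod \<beta>)^2 = 1" by (rule norm)
    show "post_state n H \<Psi> (h, c) =
              \<alpha> * (if h = z then \<psi>0 c else 0) + \<beta> * (if h = w then \<psi>1 c else 0)" for h c
      by (rule form)
    show "post_state n H \<Psi>
                ((\<lambda>(i, k). h ((if i \<in> H then \<sigma> i else i), (if k \<in> H then \<sigma> k else k))), c)
              = post_state n H \<Psi> (h, c)" if "bij_betw \<sigma> H H" for \<sigma> h c
      by (rule perm[OF that])
  qed
qed

end
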